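(* Let $G$ and $H$ be cyclically orderable graphs, each with at least two vertices, with $d(G)=d(H)$. Then for any $u\in V(G)$ and $v\in V(H)$, the series composition $G\oplus H$ obtained by gluing $u$ and $v$ is cyclically orderable.
   Context: The density of a connected graph $G$ with at least two vertices is $d(G)=\frac{|E(G)|}{|V(G)|-1}$. A cyclic base ordering (CBO) of a connected graph $G$ is a bijection $\mathcal{O}:E(G)\to\{1,\dots,|E(G)|\}$ such that for every $i\in\{1,\dots,|E(G)|\}$ the edges $\mathcal{O}^{-1}(i),\dots,\mathcal{O}^{-1}(i+|V(G)|-2)$ (indices taken cyclically modulo $|E(G)|$) induce a spanning tree of $G$; $G$ is cyclically orderable if it has a CBO. Given graphs $G$ and $H$ (vertex-disjoint) with $u\in V(G)$ and $v\in V(H)$, the series composition $G\oplus H$ is the graph obtained from the disjoint union of $G$ and $H$ by identifying $u$ and $v$ into a single vertex. *)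

theory Defs
  imports Complex_Main
begin

text \<open>Finite loopless multigraphs: a vertex set, an edge set, and for every edge
  the set of its two (distinct) end vertices. Simple graphs are the special case
  where no two edges have the same ends.\<close>

record ('v, 'e) mgraph =
  verts :: "'v set"
  edges :: "'e set"
  ends  :: "'e \<Rightarrow> 'v set"

definition wf_graph :: "('v, 'e) mgraph \<Rightarrow> bool" where
  "wf_graph G \<longleftrightarrow> finite (verts G) \<and> finite (edges G) \<and>
     (\<forall>e\<in>edges G. \<exists>x y. x \<in> verts G \<and> y \<in> verts G \<and> x \<noteq> y \<and> ends G e = {x, y})"

definition adj_in :: "('v, 'e) mgraph \<Rightarrow> 'e set \<Rightarrow> 'v \<Rightarrow> 'v \<Rightarrow> bool" where
  "adj_in G T x y \<longleftrightarrow> (\<exists>e\<in>T. ends G e = {x, y})"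

definition connected_sub :: "('v, 'e) mgraph \<Rightarrow> 'e set \<Rightarrow> bool" where
  "connected_sub G T \<longleftrightarrow>
     (\<forall>x\<in>verts G. \<forall>y\<in>verts G. (x, y) \<in> {(a, b). adj_in G T a b}\<^sup>*)"

definition connected_graph :: "('v, 'e) mgraph \<Rightarrow> bool" where
  "connected_graph G \<longleftrightarrow> wf_graph G \<and> verts G \<noteq> {} \<and> connected_sub G (edges G)"

text \<open>T \<subseteq> E induces a spanning tree: (V,T) is connected and acyclic, where acyclic
  means no edge of T lies on a cycle, i.e. removing any edge of T disconnects.\<close>
definition spanning_tree :: "('v, 'e) mgraph \<Rightarrow> 'e set \<Rightarrow> bool" where
  "spanning_tree G T \<longleftrightarrow> T \<subseteq> edges G \<and> connected_sub G T \<and>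
     (\<forall>e\<in>T. \<not> connected_sub G (T - {e}))"

definition density :: "('v, 'e) mgraph \<Rightarrow> real" where
  "density G = real (card (edges G)) / (real (card (verts G)) - 1)"

text \<open>Cyclic window of length |V|-1 starting at position i (positions 1..m, cyclic mod m).\<close>
definition cbo_window :: "('v, 'e) mgraph \<Rightarrow> ('e \<Rightarrow> nat) \<Rightarrow> nat \<Rightarrow> 'e set" where
  "cbo_window G ord i = {e \<in> edges G.
      (\<exists>k < card (verts G) - 1. ord e = (i - 1 + k) mod card (edges G) + 1)}"

definition is_CBO :: "('v, 'e) mgraph \<Rightarrow> ('e \<Rightarrow> nat) \<Rightarrow> bool" where
  "is_CBO G ord \<longleftrightarrow> bij_betw ord (edges G) {1..card (edges G)} \<and>
     (\<forall>i\<in>{1..card (edges G)}. spanning_tree G (cbo_window G ord i))"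

definition cyclically_orderable :: "('v, 'e) mgraph \<Rightarrow> bool" where
  "cyclically_orderable G \<longleftrightarrow> connected_graph G \<and> (\<exists>ord. is_CBO G ord)"

text \<open>Series composition: disjoint union of G and H with u \<in> V(G) and v \<in> V(H)
  identified (the identified vertex is represented by Inl u).\<close>
definition glue_map :: "'a \<Rightarrow> 'b \<Rightarrow> 'b \<Rightarrow> 'a + 'b" where
  "glue_map u v x = (if x = v then Inl u else Inr x)"

definition series_comp :: "('a, 'e) mgraph \<Rightarrow> ('b, 'f) mgraph \<Rightarrow> 'a \<Rightarrow> 'b
      \<Rightarrow> ('a + 'b, 'e + 'f) mgraph" where
  "series_comp G H u v =
     \<lparr> verts = Inl ` verts G \<union> glue_map u v ` verts H,
       edges = Inl ` edges G \<union> Inr ` edges H,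
       ends = (\<lambda>x. case x of Inl e \<Rightarrow> Inl ` ends G e
                           | Inr f \<Rightarrow> glue_map u v ` ends H f) \<rparr>"

end

theory Submission
  imports Defs
begin

definition cpos :: "nat \<Rightarrow> nat \<Rightarrow> nat \<Rightarrow> nat \<Rightarrow> nat" where
  "cpos T s t x = (x div T) * t + min t (x mod T - s)"
definition spos :: "nat \<Rightarrow> nat \<Rightarrow> nat \<Rightarrow> nat \<Rightarrow> nat" where
  "spos T s t p = (p div t) * T + s + p mod t"

lemma cpos_spos:
  assumes "0 < t" "s + t \<le> T"
  shows "cpos T s t (spos T s t p) = p"
proof -
  have lt: "s + p mod t < T" using assms mod_less_divisor[OF assms(1), of p] by linarith
  have "spos T s t p div T = p div t" "spos T s t p mod T = s + p mod t"
    using lt unfolding spos_def by (simp_all add: add.assoc)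
  moreover have "min t (p mod t) = p mod t" using assms(1) by simp
  ultimately show ?thesis unfolding cpos_def by simp
qed

lemma cpos_mono:
  assumes "0 < t" "s + t \<le> T" "x \<le> y"
  shows "cpos T s t x \<le> cpos T s t y"
proof (cases "x div T = y div T")
  case True
  have "x mod T \<le> y mod T"
  proof -
    have "x = (y div T) * T + x mod T" using True by (metis div_mult_mod_eq)
    moreover have "y = (y div T) * T + y mod T" by simp
    ultimately show ?thesis using assms(3) by linarith
  qed
  then have "x mod T - s \<le> y mod T - s" by (rule diff_le_mono)
  then have "min t (x mod T - s) \<le> min t (y mod T - s)" by (simp add: min.coboundedI2)
  then show ?thesis using True unfolding cpos_def by simp
next
  case False
  then have "x div T < y div T" using div_le_mono[OF assms(3), of T] by simp
  then have "x div T + 1 \<le> y div T" by simp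
  then have "(x div T) * t + t \<le> (y div T) * t"
    by (metis add_mult_distrib mult_1 mult_le_mono1)
  moreover have "min t (x mod T - s) \<le> t" by simp
  ultimately show ?thesis unfolding cpos_def by linarith
qed

lemma cpos_gt:
  assumes "0 < t" "s + t \<le> T" "spos T s t p < x"
  shows "p < cpos T s t x"
proof -
  have lt: "s + p mod t < T" using assms mod_less_divisor[OF assms(1), of p] by linarith
  have T0: "0 < T" using assms by simp
  have x: "x = (x div T) * T + x mod T" by simp
  have xm: "x mod T < T" using T0 by simp
  have p: "p = (p div t) * t + p mod t" by simp
  have pm: "p mod t < t" using assms by simp
  show ?thesis
  proof (cases "x div T = p div t")
    case True
    have "x = (p div t) * T + x mod T" using True by (metis div_mult_mod_eq)
    then have "x mod T > s + p mod t" using assms(3) unfolding spos_def by linarith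
    then have "min t (x mod T - s) > p mod t" using pm by simp
    then have "(p div t) * t + p mod t < (p div t) * t + min t (x mod T - s)" by (rule add_strict_left_mono)
    then have "p < (p div t) * t + min t (x mod T - s)" by (simp only: div_mult_mod_eq)
    then show ?thesis unfolding cpos_def using True by simp
  next
    case False
    have "p div t \<le> x div T"
    proof (rule ccontr)
      assume "\<not> ?thesis"
      then have "x div T + 1 \<le> p div t" by simp
      then have "(x div T + 1) * T \<le> (p div t) * T" by (rule mult_le_mono1)
      moreover have "x < (x div T + 1) * T" using xm by (metis add.commute div_mult_mod_eq add_less_cancel_left distrib_right mult_1)
      moreover have "(p div t) * T \<le> spos T s t p" unfolding spos_def by simp
      ultimately show False using assms(3) by linarith
    qed
    with False have "p div t + 1 \<le> x div T" by simp
    then have "(p div t + 1) * t \<le> (x div T) * t" by (rule mult_le_mono1)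
    moreover have "p < (p div t + 1) * t" using pm by (metis add.commute div_mult_mod_eq add_less_cancel_left distrib_right mult_1)
    ultimately show ?thesis unfolding cpos_def by linarith
  qed
qed

lemma cpos_le_iff:
  assumes "0 < t" "s + t \<le> T"
  shows "x \<le> spos T s t p \<longleftrightarrow> cpos T s t x \<le> p"
  using cpos_mono[OF assms, of x "spos T s t p"] cpos_spos[OF assms] cpos_gt[OF assms, of p x]
  by (metis not_le)

lemma cpos_shift:
  assumes "0 < t" "s + t \<le> T"
  shows "cpos T s t (x + b * T) = cpos T s t x + b * t"
proof -
  have T0: "0 < T" using assms by simp
  have "(x + b * T) div T = x div T + b" "(x + b * T) mod T = x mod T" using T0 by simp_all
  then show ?thesis unfolding cpos_def by (simp add: algebra_simps)
qed

lemma spos_shift: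
  assumes "0 < t"
  shows "spos T s t (p + N * (a * t)) = spos T s t p + N * (a * T)"
proof -
  have "(p + N * (a * t)) div t = p div t + N * a" "(p + N * (a * t)) mod t = p mod t"
    using assms by (simp_all add: mult.assoc[symmetric])
  then show ?thesis unfolding spos_def by (simp add: algebra_simps)
qed

lemma spos_lt:
  assumes "0 < t" "s + t \<le> T" "p < a * t"
  shows "spos T s t p < a * T"
proof -
  have "p div t < a" using assms by (simp add: div_less_iff_less_mult)
  then have "p div t + 1 \<le> a" by simp
  then have "(p div t + 1) * T \<le> a * T" by (rule mult_le_mono1)
  moreover have "s + p mod t < T" using assms mod_less_divisor[OF assms(1), of p] by linarith
  ultimately show ?thesis unfolding spos_def by (simp add: algebra_simps)
qed

lemma window_iff:
  assumes "0 < t" "s + t \<le> T" "p < a * t" "0 < a"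
  shows "(\<exists>k < b * T. spos T s t p = (w + k) mod (a * T)) \<longleftrightarrow>
         (\<exists>k < b * t. p = (cpos T s t w + k) mod (a * t))"
proof
  assume "\<exists>k < b * T. spos T s t p = (w + k) mod (a * T)"
  then obtain k where k: "k < b * T" "spos T s t p = (w + k) mod (a * T)" by blast
  define N where "N = (w + k) div (a * T)"
  have z: "w + k = spos T s t p + N * (a * T)" using k(2) unfolding N_def
    by (metis add.commute div_mult_mod_eq)
  then have z2: "w + k = spos T s t (p + N * (a * t))" using spos_shift[OF assms(1)] by simp
  have "w \<le> spos T s t (p + N * (a * t))" using z2 by linarith
  then have c1: "cpos T s t w \<le> p + N * (a * t)" using cpos_le_iff[OF assms(1,2)] by blast
  have "\<not> (w + b * T \<le> spos T s t (p + N * (a * t)))" using z2 k(1) by linarith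
  then have "\<not> (cpos T s t (w + b * T) \<le> p + N * (a * t))" using cpos_le_iff[OF assms(1,2)] by blast
  then have c2: "p + N * (a * t) < cpos T s t w + b * t" using cpos_shift[OF assms(1,2)] by simp
  show "\<exists>k < b * t. p = (cpos T s t w + k) mod (a * t)"
  proof (intro exI conjI)
    show "p + N * (a * t) - cpos T s t w < b * t" using c1 c2 by linarith
    have "cpos T s t w + (p + N * (a * t) - cpos T s t w) = p + N * (a * t)" using c1 by simp
    then show "p = (cpos T s t w + (p + N * (a * t) - cpos T s t w)) mod (a * t)"
      using assms(3) by simp
  qed
next
  assume "\<exists>k < b * t. p = (cpos T s t w + k) mod (a * t)"
  then obtain k where k: "k < b * t" "p = (cpos T s t w + k) mod (a * t)" by blast
  define x where "x = cpos T s t w + k"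
  define N where "N = x div (a * t)"
  have x: "x = p + N * (a * t)" using k(2) unfolding N_def x_def
    by (metis add.commute div_mult_mod_eq)
  have "cpos T s t w \<le> x" unfolding x_def by simp
  then have c1: "w \<le> spos T s t x" using cpos_le_iff[OF assms(1,2)] by blast
  have "\<not> (cpos T s t (w + b * T) \<le> x)" using cpos_shift[OF assms(1,2)] k(1) x_def by simp
  then have c2: "spos T s t x < w + b * T" using cpos_le_iff[OF assms(1,2)] by (meson not_le)
  have sx: "spos T s t x = spos T s t p + N * (a * T)" using x spos_shift[OF assms(1)] by simp
  have lt: "spos T s t p < a * T" using spos_lt[OF assms(1,2,3)] .
  show "\<exists>k < b * T. spos T s t p = (w + k) mod (a * T)"
  proof (intro exI conjI)
    show "spos T s t x - w < b * T" using c1 c2 by linarith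
    have "w + (spos T s t x - w) = spos T s t p + N * (a * T)" using c1 sx by simp
    then show "spos T s t p = (w + (spos T s t x - w)) mod (a * T)" using lt by simp
  qed
qed

lemma rtrancl_map_gen:
  assumes "(x, y) \<in> {(a, b). P a b}\<^sup>*"
    and "\<And>a b. P a b \<Longrightarrow> (f a, f b) \<in> {(a, b). Q a b}\<^sup>*"
  shows "(f x, f y) \<in> {(a, b). Q a b}\<^sup>*"
  using assms(1)
proof (induction rule: rtrancl_induct)
  case base
  then show ?case by simp
next
  case (step y z)
  then have "(f y, f z) \<in> {(a, b). Q a b}\<^sup>*" using assms(2) by simp
  then show ?case using step.IH by (rule rtrancl_trans[rotated])
qed

lemma rtrancl_map_gen':
  assumes "\<And>a b. P a b \<Longrightarrow> (f a, f b) \<in> {(a, b). Q a b}\<^sup>*"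
    and "(x, y) \<in> {(a, b). P a b}\<^sup>*"
  shows "(f x, f y) \<in> {(a, b). Q a b}\<^sup>*"
  using rtrancl_map_gen[of x y P f Q] assms by blast

lemma sc_simps:
  "verts (series_comp G H u v) = Inl ` verts G \<union> glue_map u v ` verts H"
  "edges (series_comp G H u v) = Inl ` edges G \<union> Inr ` edges H"
  "ends (series_comp G H u v) (Inl e) = Inl ` ends G e"
  "ends (series_comp G H u v) (Inr f) = glue_map u v ` ends H f"
  unfolding series_comp_def by simp_all

lemma glue_inj: "inj (glue_map u v)"
  unfolding glue_map_def inj_def by auto

lemma adj_Inl:
  assumes "adj_in G TG a b"
  shows "(Inl a, Inl b) \<in> {(x, y). adj_in (series_comp G H u v) (Inl ` TG \<union> Inr ` TH) x y}\<^sup>*"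
proof -
  obtain e where "e \<in> TG" "ends G e = {a, b}" using assms unfolding adj_in_def by blast
  then have "adj_in (series_comp G H u v) (Inl ` TG \<union> Inr ` TH) (Inl a) (Inl b)"
    unfolding adj_in_def by (intro bexI[of _ "Inl e"]) (auto simp: sc_simps)
  then show ?thesis by auto
qed

lemma adj_Inr:
  assumes "adj_in H TH a b"
  shows "(glue_map u v a, glue_map u v b) \<in> {(x, y). adj_in (series_comp G H u v) (Inl ` TG \<union> Inr ` TH) x y}\<^sup>*"
proof -
  obtain e where "e \<in> TH" "ends H e = {a, b}" using assms unfolding adj_in_def by blast
  then have "adj_in (series_comp G H u v) (Inl ` TG \<union> Inr ` TH) (glue_map u v a) (glue_map u v b)"
    unfolding adj_in_def by (intro bexI[of _ "Inr e"]) (auto simp: sc_simps)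
  then show ?thesis by auto
qed

lemma conn_comp:
  assumes "connected_sub G TG" "connected_sub H TH" "u \<in> verts G" "v \<in> verts H"
  shows "connected_sub (series_comp G H u v) (Inl ` TG \<union> Inr ` TH)"
proof -
  let ?R = "{(x, y). adj_in (series_comp G H u v) (Inl ` TG \<union> Inr ` TH) x y}"
  have gl: "glue_map u v v = Inl u" unfolding glue_map_def by simp
  have to: "(X, Inl u) \<in> ?R\<^sup>* \<and> (Inl u, X) \<in> ?R\<^sup>*"
    if X: "X \<in> verts (series_comp G H u v)" for X
  proof -
    have "X \<in> Inl ` verts G \<or> X \<in> glue_map u v ` verts H" using X unfolding sc_simps by simp
    then show ?thesis
    proof
      assume "X \<in> Inl ` verts G"
      then obtain x where x: "x \<in> verts G" "X = Inl x" by blast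
      have "(x, u) \<in> {(a, b). adj_in G TG a b}\<^sup>*" "(u, x) \<in> {(a, b). adj_in G TG a b}\<^sup>*"
        using assms(1) assms(3) x(1) unfolding connected_sub_def by simp_all
      then have "(Inl x, Inl u) \<in> ?R\<^sup>*" "(Inl u, Inl x) \<in> ?R\<^sup>*"
        using rtrancl_map_gen[where f=Inl, OF _ adj_Inl] by simp_all
      then show ?thesis using x(2) by simp
    next
      assume "X \<in> glue_map u v ` verts H"
      then obtain x where x: "x \<in> verts H" "X = glue_map u v x" by blast
      have "(x, v) \<in> {(a, b). adj_in H TH a b}\<^sup>*" "(v, x) \<in> {(a, b). adj_in H TH a b}\<^sup>*"
        using assms(2) assms(4) x(1) unfolding connected_sub_def by simp_all
      then have "(glue_map u v x, glue_map u v v) \<in> ?R\<^sup>*" "(glue_map u v v, glue_map u v x) \<in> ?R\<^sup>*"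
        using rtrancl_map_gen[where f="glue_map u v", OF _ adj_Inr] by simp_all
      then show ?thesis using x(2) gl by simp
    qed
  qed
  show ?thesis unfolding connected_sub_def
  proof (intro ballI)
    fix X Y assume XY: "X \<in> verts (series_comp G H u v)" "Y \<in> verts (series_comp G H u v)"
    have "(X, Inl u) \<in> ?R\<^sup>*" using to[OF XY(1)] by simp
    moreover have "(Inl u, Y) \<in> ?R\<^sup>*" using to[OF XY(2)] by simp
    ultimately show "(X, Y) \<in> ?R\<^sup>*" by (rule rtrancl_trans)
  qed
qed

lemma conn_mono:
  assumes "connected_sub G T" "T \<subseteq> T'"
  shows "connected_sub G T'"
proof -
  have "{(a, b). adj_in G T a b} \<subseteq> {(a, b). adj_in G T' a b}"
    using assms(2) unfolding adj_in_def by auto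
  then show ?thesis using assms(1) unfolding connected_sub_def
    by (meson rtrancl_mono subsetD)
qed

definition projG :: "'a \<Rightarrow> 'a + 'b \<Rightarrow> 'a" where
  "projG u X = (case X of Inl a \<Rightarrow> a | Inr b \<Rightarrow> u)"
definition projH :: "'b \<Rightarrow> 'a \<Rightarrow> 'a + 'b \<Rightarrow> 'b" where
  "projH v u X = (case X of Inl a \<Rightarrow> (if a = u then v else v) | Inr b \<Rightarrow> b)"

lemma projG_glue: "projG u (glue_map u v x) = u"
  unfolding projG_def glue_map_def by simp
lemma projH_glue: "projH v u (glue_map u v x) = x"
  unfolding projH_def glue_map_def by simp

lemma acyc_G:
  assumes "\<not> connected_sub G (TG - {e})"
  shows "\<not> connected_sub (series_comp G H u v) ((Inl ` TG \<union> Inr ` TH) - {Inl e})"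
proof
  let ?S = "series_comp G H u v"
  let ?T = "(Inl ` TG \<union> Inr ` TH) - {Inl e}"
  assume c: "connected_sub ?S ?T"
  obtain x y where xy: "x \<in> verts G" "y \<in> verts G"
    "(x, y) \<notin> {(a, b). adj_in G (TG - {e}) a b}\<^sup>*"
    using assms unfolding connected_sub_def by blast
  have reach: "(Inl x, Inl y) \<in> {(a, b). adj_in ?S ?T a b}\<^sup>*"
    using c xy(1,2) unfolding connected_sub_def sc_simps by blast
  have step: "(projG u A, projG u B) \<in> {(a, b). adj_in G (TG - {e}) a b}\<^sup>*"
    if "adj_in ?S ?T A B" for A B
  proof -
    from that obtain E where E: "E \<in> ?T" "ends ?S E = {A, B}" unfolding adj_in_def by blast
    show "(projG u A, projG u B) \<in> {(a, b). adj_in G (TG - {e}) a b}\<^sup>*"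
    proof (cases E)
      case (Inl f)
      then have "f \<in> TG - {e}" using E(1) by auto
      moreover have "projG u ` {A, B} = ends G f"
      proof -
        have "ends ?S (Inl f) = {A, B}" using E(2) Inl by simp
        then have "{A, B} = Inl ` ends G f" unfolding sc_simps by simp
        then show ?thesis by (simp add: image_image projG_def)
      qed
      ultimately have "adj_in G (TG - {e}) (projG u A) (projG u B)"
        unfolding adj_in_def by auto
      then show ?thesis by auto
    next
      case (Inr f)
      have "ends ?S (Inr f) = {A, B}" using E(2) Inr by simp
      then have "{A, B} = glue_map u v ` ends H f" unfolding sc_simps by simp
      then have "A \<in> glue_map u v ` ends H f" "B \<in> glue_map u v ` ends H f" by blast+
      then have "projG u A = projG u B" unfolding projG_def glue_map_def by auto
      then show ?thesis by simp
    qed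
  qed
  from rtrancl_map_gen[of "Inl x" "Inl y" "\<lambda>a b. adj_in ?S ?T a b" "projG u" "\<lambda>a b. adj_in G (TG - {e}) a b", OF reach step] have "(x, y) \<in> {(a, b). adj_in G (TG - {e}) a b}\<^sup>*"
    by (simp add: projG_def)
  then show False using xy(3) by simp
qed

lemma acyc_H:
  assumes "\<not> connected_sub H (TH - {e})"
  shows "\<not> connected_sub (series_comp G H u v) ((Inl ` TG \<union> Inr ` TH) - {Inr e})"
proof
  let ?S = "series_comp G H u v"
  let ?T = "(Inl ` TG \<union> Inr ` TH) - {Inr e}"
  assume c: "connected_sub ?S ?T"
  obtain x y where xy: "x \<in> verts H" "y \<in> verts H"
    "(x, y) \<notin> {(a, b). adj_in H (TH - {e}) a b}\<^sup>*"
    using assms unfolding connected_sub_def by blast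
  have "(glue_map u v x, glue_map u v y) \<in> {(a, b). adj_in ?S ?T a b}\<^sup>*"
    using c xy(1,2) unfolding connected_sub_def sc_simps by blast
  moreover have "(projH v u A, projH v u B) \<in> {(a, b). adj_in H (TH - {e}) a b}\<^sup>*"
    if "adj_in ?S ?T A B" for A B
  proof -
    from that obtain E where E: "E \<in> ?T" "ends ?S E = {A, B}" unfolding adj_in_def by blast
    show "(projH v u A, projH v u B) \<in> {(a, b). adj_in H (TH - {e}) a b}\<^sup>*"
    proof (cases E)
      case (Inr f)
      then have "f \<in> TH - {e}" using E(1) by auto
      moreover have "projH v u ` {A, B} = ends H f"
      proof -
        have "ends ?S (Inr f) = {A, B}" using E(2) Inr by simp
        then have "{A, B} = glue_map u v ` ends H f" unfolding sc_simps by simp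
        then have "projH v u ` {A, B} = (projH v u \<circ> glue_map u v) ` ends H f"
          by (simp add: image_comp)
        then show ?thesis by (simp add: comp_def projH_glue)
      qed
      ultimately have "adj_in H (TH - {e}) (projH v u A) (projH v u B)"
        unfolding adj_in_def by auto
      then show ?thesis by auto
    next
      case (Inl f)
      have "ends ?S (Inl f) = {A, B}" using E(2) Inl by simp
      then have "{A, B} = Inl ` ends G f" unfolding sc_simps by simp
      then have "A \<in> Inl ` ends G f" "B \<in> Inl ` ends G f" by blast+
      then have "projH v u A = projH v u B" unfolding projH_def by auto
      then show ?thesis by simp
    qed
  qed
  ultimately have "(projH v u (glue_map u v x), projH v u (glue_map u v y)) \<in> {(a, b). adj_in H (TH - {e}) a b}\<^sup>*"
    by (rule rtrancl_map_gen)
  then show False using xy(3) unfolding projH_glue by simp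
qed

lemma span_comp:
  assumes "spanning_tree G TG" "spanning_tree H TH" "u \<in> verts G" "v \<in> verts H"
  shows "spanning_tree (series_comp G H u v) (Inl ` TG \<union> Inr ` TH)"
  unfolding spanning_tree_def
proof (intro conjI ballI)
  have "TG \<subseteq> edges G" "TH \<subseteq> edges H" using assms(1,2) unfolding spanning_tree_def by simp_all
  then show "Inl ` TG \<union> Inr ` TH \<subseteq> edges (series_comp G H u v)"
    unfolding sc_simps by (intro Un_mono image_mono)
  have "connected_sub G TG" "connected_sub H TH" using assms(1,2) unfolding spanning_tree_def by simp_all
  then show "connected_sub (series_comp G H u v) (Inl ` TG \<union> Inr ` TH)"
    using conn_comp[OF _ _ assms(3,4)] by blast
  fix E assume "E \<in> Inl ` TG \<union> Inr ` TH"
  then show "\<not> connected_sub (series_comp G H u v) (Inl ` TG \<union> Inr ` TH - {E})"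
  proof
    assume "E \<in> Inl ` TG"
    then obtain e where "e \<in> TG" "E = Inl e" by blast
    moreover have "\<not> connected_sub G (TG - {e})" using assms(1) \<open>e \<in> TG\<close> unfolding spanning_tree_def by blast
    ultimately show ?thesis using acyc_G by metis
  next
    assume "E \<in> Inr ` TH"
    then obtain e where "e \<in> TH" "E = Inr e" by blast
    moreover have "\<not> connected_sub H (TH - {e})" using assms(2) \<open>e \<in> TH\<close> unfolding spanning_tree_def by blast
    ultimately show ?thesis using acyc_H by metis
  qed
qed

lemma spos_mod:
  assumes "0 < t" "s + t \<le> T"
  shows "spos T s t p mod T = s + p mod t"
proof -
  have lt: "s + p mod t < T" using assms mod_less_divisor[OF assms(1), of p] by linarith
  then show ?thesis unfolding spos_def by (simp add: add.assoc)
qed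

lemma side:
  assumes "0 < t" "s + t \<le> T" "0 < a" "1 \<le> q" "q \<le> a * t"
  shows "(\<exists>k<b*T. spos T s t (q - 1) + 1 = (w + k) mod (a*T) + 1) \<longleftrightarrow>
         (\<exists>k<b*t. q = (cpos T s t w mod (a*t) + 1 - 1 + k) mod (a*t) + 1)"
proof -
  have p: "q - 1 < a * t" using assms(4,5) by simp
  have "(\<exists>k<b*T. spos T s t (q - 1) + 1 = (w + k) mod (a*T) + 1) \<longleftrightarrow>
        (\<exists>k<b*T. spos T s t (q - 1) = (w + k) mod (a*T))" by simp
  also have "\<dots> \<longleftrightarrow> (\<exists>k < b * t. q - 1 = (cpos T s t w + k) mod (a * t))"
    by (rule window_iff[OF assms(1,2) p assms(3)])
  also have "\<dots> \<longleftrightarrow> (\<exists>k<b*t. q = (cpos T s t w mod (a*t) + 1 - 1 + k) mod (a*t) + 1)"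
    using assms(4) by (auto simp: mod_add_left_eq)
  finally show ?thesis .
qed

lemma ratio:
  fixes m1 r1 m2 r2 :: nat
  assumes "m1 * r2 = m2 * r1" "0 < m1" "0 < r1" "0 < m2" "0 < r2"
  shows "\<exists>a b t1 t2. m1 = a*t1 \<and> r1 = b*t1 \<and> m2 = a*t2 \<and> r2 = b*t2 \<and> 0 < t1 \<and> 0 < t2 \<and> 0 < a"
proof -
  define t1 where "t1 = gcd m1 r1"
  define t2 where "t2 = gcd m2 r2"
  define a1 where "a1 = m1 div t1"
  define b1 where "b1 = r1 div t1"
  define a2 where "a2 = m2 div t2"
  define b2 where "b2 = r2 div t2"
  have t1: "0 < t1" using assms unfolding t1_def by simp
  have t2: "0 < t2" using assms unfolding t2_def by simp
  have m1: "m1 = a1 * t1" and r1: "r1 = b1 * t1" unfolding a1_def b1_def t1_def by simp_all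
  have m2: "m2 = a2 * t2" and r2: "r2 = b2 * t2" unfolding a2_def b2_def t2_def by simp_all
  have c1: "coprime a1 b1" unfolding a1_def b1_def t1_def using assms(2) by (intro div_gcd_coprime) simp
  have c2: "coprime a2 b2" unfolding a2_def b2_def t2_def using assms(4) by (intro div_gcd_coprime) simp
  have "(a1 * b2) * (t1 * t2) = (a2 * b1) * (t1 * t2)" using assms(1) m1 m2 r1 r2
    by (simp add: ac_simps)
  then have e: "a1 * b2 = a2 * b1" using t1 t2 by simp
  have "a1 dvd a2 * b1" using e by (metis dvd_triv_left)
  then have "a1 dvd a2" using c1 by (simp add: coprime_dvd_mult_left_iff)
  moreover have "a2 dvd a1 * b2" using e by (metis dvd_triv_left)
  then have "a2 dvd a1" using c2 by (simp add: coprime_dvd_mult_left_iff)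
  ultimately have aa: "a1 = a2" by (simp add: dvd_antisym)
  have a1: "0 < a1" using m1 assms(2) by (metis gr0I mult_0)
  then have bb: "b1 = b2" using e aa by simp
  show ?thesis using m1 r1 m2 r2 aa bb t1 t2 a1 by blast
qed

lemma card_verts_sc:
  assumes "finite (verts G)" "finite (verts H)" "u \<in> verts G" "v \<in> verts H"
  shows "card (verts (series_comp G H u v)) = card (verts G) + card (verts H) - 1"
proof -
  have eq: "verts (series_comp G H u v) = Inl ` verts G \<union> Inr ` (verts H - {v})"
    using assms(3,4) unfolding sc_simps glue_map_def by auto
  have "card (verts H - {v}) = card (verts H) - 1" using assms by simp
  moreover have "card (verts H) \<ge> 1" using assms card_gt_0_iff[of "verts H"] by auto
  ultimately show ?thesis unfolding eq using assms
    by (subst card_Un_disjoint) (auto simp: card_image)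
qed

lemma card_edges_sc:
  assumes "finite (edges G)" "finite (edges H)"
  shows "card (edges (series_comp G H u v)) = card (edges G) + card (edges H)"
  unfolding sc_simps using assms by (subst card_Un_disjoint) (auto simp: card_image)

lemma wf_sc:
  assumes "wf_graph G" "wf_graph H"
  shows "wf_graph (series_comp G H u v)"
  unfolding wf_graph_def
proof (intro conjI ballI)
  show "finite (verts (series_comp G H u v))" "finite (edges (series_comp G H u v))"
    using assms unfolding wf_graph_def sc_simps by auto
  fix E assume "E \<in> edges (series_comp G H u v)"
  then show "\<exists>x y. x \<in> verts (series_comp G H u v) \<and> y \<in> verts (series_comp G H u v) \<and> x \<noteq> y \<and>
      ends (series_comp G H u v) E = {x, y}"
  proof (cases E)
    case (Inl e)
    then have "e \<in> edges G" using \<open>E \<in> _\<close> unfolding sc_simps by auto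
    then obtain x y where xy: "x \<in> verts G" "y \<in> verts G" "x \<noteq> y" "ends G e = {x, y}"
      using assms(1) unfolding wf_graph_def by blast
    have "ends (series_comp G H u v) E = {Inl x, Inl y}" using Inl xy(4) by (simp add: sc_simps)
    moreover have "Inl x \<in> verts (series_comp G H u v)" "Inl y \<in> verts (series_comp G H u v)"
      using xy by (simp_all add: sc_simps)
    moreover have "(Inl x :: 'a + 'c) \<noteq> Inl y" using xy(3) by simp
    ultimately show ?thesis by blast
  next
    case (Inr e)
    then have "e \<in> edges H" using \<open>E \<in> _\<close> unfolding sc_simps by auto
    then obtain x y where xy: "x \<in> verts H" "y \<in> verts H" "x \<noteq> y" "ends H e = {x, y}"
      using assms(2) unfolding wf_graph_def by blast
    have "ends (series_comp G H u v) E = {glue_map u v x, glue_map u v y}" using Inr xy(4) by (simp add: sc_simps)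
    moreover have "glue_map u v x \<in> verts (series_comp G H u v)" "glue_map u v y \<in> verts (series_comp G H u v)"
      using xy by (simp_all add: sc_simps)
    moreover have "glue_map u v x \<noteq> glue_map u v y" using xy(3) glue_inj unfolding inj_def by metis
    ultimately show ?thesis by blast
  qed
qed

lemma edges_nonempty:
  assumes "connected_graph G" "card (verts G) \<ge> 2"
  shows "edges G \<noteq> {}"
proof
  assume E: "edges G = {}"
  have fin: "finite (verts G)" using assms(1) unfolding connected_graph_def wf_graph_def by simp
  have "verts G \<noteq> {}" using assms(2) by (metis card.empty not_numeral_le_zero)
  then obtain x where x: "x \<in> verts G" by blast
  have "card (verts G - {x}) = card (verts G) - 1" using x fin by simp
  then have "verts G - {x} \<noteq> {}" using assms(2) by (metis card.empty not_numeral_le_zero diff_is_0_eq numeral_le_one_iff semiring_norm(69) One_nat_def Suc_1 Suc_le_eq diff_Suc_1 le_add_diff_inverse less_numeral_extra(3) zero_less_diff)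
  then obtain y where y: "y \<in> verts G" "y \<noteq> x" by blast
  have "{(a, b). adj_in G (edges G) a b} = {}" using E unfolding adj_in_def by simp
  moreover have "(x, y) \<in> {(a, b). adj_in G (edges G) a b}\<^sup>*"
    using assms(1) x y unfolding connected_graph_def connected_sub_def by blast
  ultimately show False using y by simp
qed


lemma main_ord:
  fixes G :: "('a, 'e) mgraph" and H :: "('b, 'f) mgraph" and u :: 'a and v :: 'b
  assumes oG: "is_CBO G oG" and oH: "is_CBO H oH"
    and fin: "finite (verts G)" "finite (verts H)" "finite (edges G)" "finite (edges H)"
    and uv: "u \<in> verts G" "v \<in> verts H"
    and mG: "card (edges G) = a * tG" and rG: "card (verts G) - 1 = b * tG"
    and mH: "card (edges H) = a * tH" and rH: "card (verts H) - 1 = b * tH"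
    and pos: "0 < tG" "0 < tH" "0 < a"
    and nG: "card (verts G) \<ge> 2" and nH: "card (verts H) \<ge> 2"
  shows "\<exists>ord. is_CBO (series_comp G H u v) ord"
proof -
  let ?S = "series_comp G H u v"
  define T where "T = tG + tH"
  define ord where "ord x = (case x of Inl e \<Rightarrow> spos T 0 tG (oG e - 1) + 1
                                     | Inr f \<Rightarrow> spos T tG tH (oH f - 1) + 1)" for x
  have cT: "0 + tG \<le> T" "tG + tH \<le> T" unfolding T_def by simp_all
  have mS: "card (edges ?S) = a * T" using card_edges_sc[OF fin(3,4)] mG mH unfolding T_def
    by (simp add: algebra_simps)
  have rS: "card (verts ?S) - 1 = b * T" using card_verts_sc[OF fin(1,2) uv] rG rH nG nH unfolding T_def
    by (simp add: algebra_simps)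
  have bG: "bij_betw oG (edges G) {1..a * tG}" using oG mG unfolding is_CBO_def by simp
  have bH: "bij_betw oH (edges H) {1..a * tH}" using oH mH unfolding is_CBO_def by simp
  have oGr: "1 \<le> oG e \<and> oG e \<le> a * tG" if "e \<in> edges G" for e
    using bij_betw_apply[OF bG that] by simp
  have oHr: "1 \<le> oH e \<and> oH e \<le> a * tH" if "e \<in> edges H" for e
    using bij_betw_apply[OF bH that] by simp
  have rng: "ord x \<in> {1..a * T}" if "x \<in> edges ?S" for x
  proof (cases x)
    case (Inl e)
    then have "e \<in> edges G" using that unfolding sc_simps by auto
    then have "oG e - 1 < a * tG" using oGr by fastforce
    then have "spos T 0 tG (oG e - 1) < a * T" using spos_lt[OF pos(1) cT(1)] by blast
    then show ?thesis using Inl unfolding ord_def by simp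
  next
    case (Inr e)
    then have "e \<in> edges H" using that unfolding sc_simps by auto
    then have "oH e - 1 < a * tH" using oHr by fastforce
    then have "spos T tG tH (oH e - 1) < a * T" using spos_lt[OF pos(2) cT(2)] by blast
    then show ?thesis using Inr unfolding ord_def by simp
  qed
  have inj: "inj_on ord (edges ?S)"
  proof (rule inj_onI)
    fix x y assume x: "x \<in> edges ?S" and y: "y \<in> edges ?S" and eq: "ord x = ord y"
    show "x = y"
    proof (cases x; cases y)
      fix e1 e2 assume e: "x = Inl e1" "y = Inl e2"
      then have ee: "e1 \<in> edges G" "e2 \<in> edges G" using x y unfolding sc_simps by auto
      have "spos T 0 tG (oG e1 - 1) = spos T 0 tG (oG e2 - 1)" using eq e unfolding ord_def by simp
      then have "cpos T 0 tG (spos T 0 tG (oG e1 - 1)) = cpos T 0 tG (spos T 0 tG (oG e2 - 1))" by simp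
      then have "oG e1 - 1 = oG e2 - 1" using cpos_spos[OF pos(1) cT(1)] by simp
      then have "oG e1 = oG e2" using oGr[OF ee(1)] oGr[OF ee(2)] by arith
      then have "e1 = e2" using bij_betw_imp_inj_on[OF bG] ee unfolding inj_on_def by blast
      then show "x = y" using e by simp
    next
      fix e1 e2 assume e: "x = Inr e1" "y = Inr e2"
      then have ee: "e1 \<in> edges H" "e2 \<in> edges H" using x y unfolding sc_simps by auto
      have "spos T tG tH (oH e1 - 1) = spos T tG tH (oH e2 - 1)" using eq e unfolding ord_def by simp
      then have "cpos T tG tH (spos T tG tH (oH e1 - 1)) = cpos T tG tH (spos T tG tH (oH e2 - 1))" by simp
      then have "oH e1 - 1 = oH e2 - 1" using cpos_spos[OF pos(2) cT(2)] by simp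
      then have "oH e1 = oH e2" using oHr[OF ee(1)] oHr[OF ee(2)] by arith
      then have "e1 = e2" using bij_betw_imp_inj_on[OF bH] ee unfolding inj_on_def by blast
      then show "x = y" using e by simp
    next
      fix e1 e2 assume e: "x = Inl e1" "y = Inr e2"
      have "spos T 0 tG (oG e1 - 1) = spos T tG tH (oH e2 - 1)" using eq e unfolding ord_def by simp
      then have "spos T 0 tG (oG e1 - 1) mod T = spos T tG tH (oH e2 - 1) mod T" by simp
      then have "(oG e1 - 1) mod tG = tG + (oH e2 - 1) mod tH"
        using spos_mod[OF pos(1) cT(1)] spos_mod[OF pos(2) cT(2)] by simp
      moreover have "(oG e1 - 1) mod tG < tG" using pos(1) by simp
      ultimately show "x = y" by simp
    next
      fix e1 e2 assume e: "x = Inr e1" "y = Inl e2"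
      have "spos T 0 tG (oG e2 - 1) = spos T tG tH (oH e1 - 1)" using eq e unfolding ord_def by simp
      then have "spos T 0 tG (oG e2 - 1) mod T = spos T tG tH (oH e1 - 1) mod T" by simp
      then have "(oG e2 - 1) mod tG = tG + (oH e1 - 1) mod tH"
        using spos_mod[OF pos(1) cT(1)] spos_mod[OF pos(2) cT(2)] by simp
      moreover have "(oG e2 - 1) mod tG < tG" using pos(1) by simp
      ultimately show "x = y" by simp
    qed
  qed
  have finS: "finite (edges ?S)" using fin unfolding sc_simps by simp
  have img: "ord ` edges ?S = {1..a * T}"
  proof (rule card_subset_eq)
    show "finite {1..a * T}" by simp
    show "ord ` edges ?S \<subseteq> {1..a * T}" using rng by blast
    show "card (ord ` edges ?S) = card {1..a * T}" using card_image[OF inj] mS by simp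
  qed
  have bij: "bij_betw ord (edges ?S) {1..card (edges ?S)}"
    unfolding bij_betw_def using inj img mS by simp
  have win: "spanning_tree ?S (cbo_window ?S ord i)" if i: "i \<in> {1..card (edges ?S)}" for i
  proof -
    define w where "w = i - 1"
    define iG where "iG = cpos T 0 tG w mod (a * tG) + 1"
    define iH where "iH = cpos T tG tH w mod (a * tH) + 1"
    have iG: "iG \<in> {1..card (edges G)}" unfolding iG_def mG using pos
      by (simp add: Suc_leI)
    have iH: "iH \<in> {1..card (edges H)}" unfolding iH_def mH using pos
      by (simp add: Suc_leI)
    have stG: "spanning_tree G (cbo_window G oG iG)" using oG iG unfolding is_CBO_def by blast
    have stH: "spanning_tree H (cbo_window H oH iH)" using oH iH unfolding is_CBO_def by blast
    have eqw: "cbo_window ?S ord i = Inl ` cbo_window G oG iG \<union> Inr ` cbo_window H oH iH"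
    proof (rule set_eqI)
      fix x
      show "x \<in> cbo_window ?S ord i \<longleftrightarrow> x \<in> Inl ` cbo_window G oG iG \<union> Inr ` cbo_window H oH iH"
      proof (cases x)
        case (Inl e)
        have "x \<in> cbo_window ?S ord i \<longleftrightarrow> e \<in> edges G \<and>
            (\<exists>k<b*T. spos T 0 tG (oG e - 1) + 1 = (w + k) mod (a*T) + 1)"
          unfolding cbo_window_def mS rS Inl w_def ord_def by (auto simp: sc_simps)
        also have "\<dots> \<longleftrightarrow> e \<in> edges G \<and>
            (\<exists>k<b*tG. oG e = (cpos T 0 tG w mod (a*tG) + 1 - 1 + k) mod (a*tG) + 1)"
          using side[OF pos(1) cT(1) pos(3)] oGr by blast
        also have "\<dots> \<longleftrightarrow> e \<in> cbo_window G oG iG"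
          unfolding cbo_window_def mG rG iG_def by simp
        also have "\<dots> \<longleftrightarrow> x \<in> Inl ` cbo_window G oG iG \<union> Inr ` cbo_window H oH iH"
          using Inl by auto
        finally show ?thesis .
      next
        case (Inr e)
        have "x \<in> cbo_window ?S ord i \<longleftrightarrow> e \<in> edges H \<and>
            (\<exists>k<b*T. spos T tG tH (oH e - 1) + 1 = (w + k) mod (a*T) + 1)"
          unfolding cbo_window_def mS rS Inr w_def ord_def by (auto simp: sc_simps)
        also have "\<dots> \<longleftrightarrow> e \<in> edges H \<and>
            (\<exists>k<b*tH. oH e = (cpos T tG tH w mod (a*tH) + 1 - 1 + k) mod (a*tH) + 1)"
          using side[OF pos(2) cT(2) pos(3)] oHr by blast
        also have "\<dots> \<longleftrightarrow> e \<in> cbo_window H oH iH"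
          unfolding cbo_window_def mH rH iH_def by simp
        also have "\<dots> \<longleftrightarrow> x \<in> Inl ` cbo_window G oG iG \<union> Inr ` cbo_window H oH iH"
          using Inr by auto
        finally show ?thesis .
      qed
    qed
    show ?thesis unfolding eqw by (rule span_comp[OF stG stH uv])
  qed
  have "is_CBO ?S ord" unfolding is_CBO_def using bij win by blast
  then show ?thesis by blast
qed


theorem mainTheorem6:
  fixes G :: "('a, 'e) mgraph" and H :: "('b, 'f) mgraph" and u :: 'a and v :: 'b
  assumes "cyclically_orderable G" and "cyclically_orderable H"
    and "card (verts G) \<ge> 2" and "card (verts H) \<ge> 2"
    and "density G = density H"
    and "u \<in> verts G" and "v \<in> verts H"
  shows "cyclically_orderable (series_comp G H u v)"
proof -
  have cG: "connected_graph G" and cH: "connected_graph H"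
    using assms(1,2) unfolding cyclically_orderable_def by simp_all
  obtain oG where oG: "is_CBO G oG" using assms(1) unfolding cyclically_orderable_def by blast
  obtain oH where oH: "is_CBO H oH" using assms(2) unfolding cyclically_orderable_def by blast
  have wG: "wf_graph G" and wH: "wf_graph H" using cG cH unfolding connected_graph_def by simp_all
  have fin: "finite (verts G)" "finite (verts H)" "finite (edges G)" "finite (edges H)"
    using wG wH unfolding wf_graph_def by simp_all
  define mG where "mG = card (edges G)"
  define mH where "mH = card (edges H)"
  define rG where "rG = card (verts G) - 1"
  define rH where "rH = card (verts H) - 1"
  have mG0: "0 < mG" unfolding mG_def using edges_nonempty[OF cG assms(3)] fin(3) card_gt_0_iff by blast
  have mH0: "0 < mH" unfolding mH_def using edges_nonempty[OF cH assms(4)] fin(4) card_gt_0_iff by blast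
  have rG0: "0 < rG" unfolding rG_def using assms(3) by simp
  have rH0: "0 < rH" unfolding rH_def using assms(4) by simp
  have "real (card (verts G)) - 1 = real rG" unfolding rG_def using assms(3) by (simp add: of_nat_diff)
  moreover have "real (card (verts H)) - 1 = real rH" unfolding rH_def using assms(4) by (simp add: of_nat_diff)
  ultimately have "real mG / real rG = real mH / real rH"
    using assms(5) unfolding density_def mG_def mH_def by simp
  then have "real mG * real rH = real mH * real rG" using rG0 rH0 by (simp add: field_simps)
  then have "real (mG * rH) = real (mH * rG)" by simp
  then have eq: "mG * rH = mH * rG" by (simp only: of_nat_eq_iff)
  obtain a b tG tH where r: "mG = a*tG" "rG = b*tG" "mH = a*tH" "rH = b*tH" "0 < tG" "0 < tH" "0 < a"
    using ratio[OF eq mG0 rG0 mH0 rH0] by blast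
  have "\<exists>ord. is_CBO (series_comp G H u v) ord"
    using main_ord[OF oG oH fin assms(6,7), of a tG b tH] r assms(3,4)
    unfolding mG_def rG_def mH_def rH_def by blast
  moreover have "connected_graph (series_comp G H u v)"
    unfolding connected_graph_def
  proof (intro conjI)
    show "wf_graph (series_comp G H u v)" by (rule wf_sc[OF wG wH])
    show "verts (series_comp G H u v) \<noteq> {}" using assms(6) unfolding sc_simps by blast
    have "connected_sub (series_comp G H u v) (Inl ` edges G \<union> Inr ` edges H)"
      by (rule conn_comp) (use cG cH assms(6,7) in \<open>simp_all add: connected_graph_def\<close>)
    then show "connected_sub (series_comp G H u v) (edges (series_comp G H u v))"
      unfolding sc_simps .
  qed
  ultimately show ?thesis unfolding cyclically_orderable_def by blast
qed

end
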